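(* Let $d\in\mathbb{N}$, and let $x,y\in\mathbb{R}^d$. The sets $\Pi$, $\Pi^{y}$ and $\Phi(x)$ are coanalytic, and hence Lebesgue measurable.
   Context: For $z\in\mathbb{R}^d$, $\|z\|$ denotes the sup-norm distance from $z$ to $\mathbb{Z}^d$. Write $\mathbb{N}=\{1,2,\dots\}$. For $\psi:\mathbb{N}\to\mathbb{R}_{\ge 0}$, let $W(\psi)$ be the set of pairs $(x,y)\in\mathbb{R}^d\times\mathbb{R}^d$ for which $\|nx+y\|<\psi(n)$ holds for infinitely many $n\in\mathbb{N}$. $\mathcal{D}$ is the set of all non-increasing $\psi:\mathbb{N}\to\mathbb{R}_{\ge0}$ with $\sum_n\psi(n)^d=\infty$, and $\Pi=\bigcap_{\psi\in\mathcal{D}}W(\psi)$. The vertical fiber is $\Phi(x)=\{y\in\mathbb{R}^d:(x,y)\in\Pi\}$ and the horizontal fiber is $\Pi^{y}=\{x\in\mathbb{R}^d:(x,y)\in\Pi\}$. Definitions from descriptive set theory: - A set is analytic if it is the projection of a Borel subset of $\mathbb{N}^{\mathbb{N}}\times X$, where $X$ is the ambient Euclidean space. - A set is coanalytic if its complement is analytic. *)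

theory Defs
  imports "HOL-Analysis.Analysis"
begin

text \<open>Analytic sets: projections of Borel subsets of Baire space times the ambient space.
  Baire space is modelled as nat \<Rightarrow> nat with the product topology (Function_Topology).\<close>
definition analytic :: "'a::topological_space set \<Rightarrow> bool" where
  "analytic S \<longleftrightarrow>
     (\<exists>B \<in> sets (borel :: ((nat \<Rightarrow> nat) \<times> 'a) measure). S = snd ` B)"

definition coanalytic :: "'a::topological_space set \<Rightarrow> bool" where
  "coanalytic S \<longleftrightarrow> analytic (- S)"

definition distZ :: "real ^ 'd \<Rightarrow> real" where
  "distZ z = Max (range (\<lambda>i. \<bar>z $ i - of_int (round (z $ i))\<bar>))"

text \<open>W(psi); only n \<ge> 1 are considered (N = {1,2,...}).\<close>
definition W :: "(nat \<Rightarrow> real) \<Rightarrow> ((real ^ 'd) \<times> (real ^ 'd)) set" where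
  "W \<psi> = {(x, y). infinite {n::nat. n \<ge> 1 \<and> distZ (of_nat n *\<^sub>R x + y) < \<psi> n}}"

text \<open>The class D (for dimension CARD('d)); the value psi 0 is irrelevant.\<close>
definition Dset :: "'d itself \<Rightarrow> (nat \<Rightarrow> real) set" where
  "Dset _ = {\<psi>. (\<forall>n\<ge>1. 0 \<le> \<psi> n) \<and> (\<forall>m n. 1 \<le> m \<longrightarrow> m \<le> n \<longrightarrow> \<psi> n \<le> \<psi> m)
               \<and> \<not> summable (\<lambda>n. \<psi> (Suc n) ^ CARD('d))}"

definition Pi_set :: "((real ^ 'd) \<times> (real ^ 'd)) set" where
  "Pi_set = (\<Inter>\<psi> \<in> Dset TYPE('d). W \<psi>)"

definition Phi :: "real ^ 'd \<Rightarrow> (real ^ 'd) set" where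
  "Phi x = {y. (x, y) \<in> Pi_set}"

definition Pi_hor :: "real ^ 'd \<Rightarrow> (real ^ 'd) set" where
  "Pi_hor y = {x. (x, y) \<in> Pi_set}"

end

theory Submission imports Defs begin

lemma distZ_meas[measurable]: "(distZ :: real^'d \<Rightarrow> real) \<in> borel_measurable borel"
proof -
  have "distZ = (\<lambda>z::real^'d. Max ((\<lambda>i. \<bar>z $ i - real_of_int \<lfloor>z $ i + 1/2\<rfloor>\<bar>) ` UNIV))"
    by (auto simp: distZ_def round_def fun_eq_iff)
  also have "\<dots> \<in> borel_measurable borel"
    by (intro borel_measurable_Max) auto
  finally show ?thesis .
qed

lemma distZ_nonneg: "0 \<le> distZ z"
  unfolding distZ_def by (rule order_trans[OF _ Max_ge[where x="\<bar>z $ undefined - of_int (round (z $ undefined))\<bar>"]]) auto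

lemma snd_meas: "(snd :: 'a::topological_space \<times> 'b::topological_space \<Rightarrow> 'b) \<in> borel_measurable borel"
  by (intro borel_measurable_continuous_onI continuous_on_snd continuous_on_id)

lemma pair_meas: "(\<lambda>x::'a::topological_space. (x, c::'b::topological_space)) \<in> borel_measurable borel"
  by (intro borel_measurable_continuous_onI continuous_on_Pair continuous_on_id continuous_on_const)
lemma pair_meas2: "(\<lambda>x::'a::topological_space. (c::'b::topological_space, x)) \<in> borel_measurable borel"
  by (intro borel_measurable_continuous_onI continuous_on_Pair continuous_on_id continuous_on_const)

definition aa :: "(real^'d) \<times> (real^'d) \<Rightarrow> nat \<Rightarrow> real" where
  "aa z m = distZ (of_nat m *\<^sub>R fst z + snd z)"

definition mn :: "(real^'d) \<times> (real^'d) \<Rightarrow> nat \<Rightarrow> nat \<Rightarrow> real" where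
  "mn z N n = Min ((\<lambda>m. aa z m) ` {N..max n N})"

definition GG :: "((real ^ 'd) \<times> (real ^ 'd)) set" where
  "GG = {z. \<forall>N. 1 \<le> N \<longrightarrow> (\<exists>M::nat. \<forall>k. (\<Sum>j\<le>k. mn z N (Suc j) ^ CARD('d)) \<le> real M)}"

lemma mn_nonneg: "0 \<le> mn z N n"
  unfolding mn_def by (subst Min_ge_iff) (auto simp: aa_def distZ_nonneg)

lemma mn_le: "N \<le> n \<Longrightarrow> mn z N n \<le> aa z n"
  unfolding mn_def by (rule Min_le) auto

lemma mn_mono: "m \<le> n \<Longrightarrow> mn z N n \<le> mn z N m"
  unfolding mn_def by (rule Min_antimono) auto

lemma GG_meas: "GG \<in> sets borel"
proof -
  have [measurable]: "\<And>m. (\<lambda>z. aa z m) \<in> borel_measurable borel"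
  proof -
    fix m
    have "(\<lambda>z::(real^'d) \<times> (real^'d). of_nat m *\<^sub>R fst z + snd z) \<in> borel_measurable borel"
      by (intro borel_measurable_continuous_onI continuous_intros)
    from measurable_compose[OF this distZ_meas] show "(\<lambda>z. aa z m) \<in> borel_measurable borel"
      by (simp add: aa_def)
  qed
  have [measurable]: "\<And>N n. (\<lambda>z. mn z N n) \<in> borel_measurable borel"
    unfolding mn_def by (intro borel_measurable_Min) auto
  have "Measurable.pred borel (\<lambda>z. z \<in> GG)"
    unfolding GG_def by measurable
  then show ?thesis by (simp add: Measurable.pred_def)
qed

lemma Pi_eq: "(Pi_set :: ((real ^ 'd) \<times> (real ^ 'd)) set) = GG"
proof
  show "Pi_set \<subseteq> (GG :: ((real ^ 'd) \<times> (real ^ 'd)) set)"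
  proof
    fix z :: "(real ^ 'd) \<times> (real ^ 'd)"
    assume zP: "z \<in> Pi_set"
    show "z \<in> GG" unfolding GG_def
    proof (intro CollectI allI impI)
      fix N :: nat assume N: "1 \<le> N"
      let ?f = "\<lambda>n. mn z N (Suc n) ^ CARD('d)"
      have "summable ?f"
      proof (rule ccontr)
        assume ns: "\<not> summable ?f"
        have D: "mn z N \<in> Dset TYPE('d)"
          unfolding Dset_def using ns by (auto simp: mn_nonneg mn_mono)
        have "{n. n \<ge> 1 \<and> distZ (of_nat n *\<^sub>R fst z + snd z) < mn z N n} \<subseteq> {..<N}"
        proof
          fix n assume "n \<in> {n. n \<ge> 1 \<and> distZ (of_nat n *\<^sub>R fst z + snd z) < mn z N n}"
          then have "aa z n < mn z N n" by (simp add: aa_def)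
          with mn_le[of N n z] show "n \<in> {..<N}" by (cases "N \<le> n") auto
        qed
        then have "z \<notin> W (mn z N)"
          by (cases z) (auto simp: W_def dest: finite_subset)
        with D zP show False unfolding Pi_set_def by blast
      qed
      then have "\<forall>k. (\<Sum>j\<le>k. ?f j) \<le> real (nat \<lceil>suminf ?f\<rceil>)"
        by (auto intro!: order_trans[OF sum_le_suminf] simp: mn_nonneg real_nat_ceiling_ge)
      then show "\<exists>M::nat. \<forall>k. (\<Sum>j\<le>k. ?f j) \<le> real M" by blast
    qed
  qed
next
  show "(GG :: ((real ^ 'd) \<times> (real ^ 'd)) set) \<subseteq> Pi_set"
  proof
    fix z :: "(real ^ 'd) \<times> (real ^ 'd)"
    assume zG: "z \<in> GG"
    show "z \<in> Pi_set" unfolding Pi_set_def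
    proof
      fix \<psi> assume D: "\<psi> \<in> Dset TYPE('d)"
      have nn: "\<And>n. n \<ge> 1 \<Longrightarrow> 0 \<le> \<psi> n" and mo: "\<And>m n. 1 \<le> m \<Longrightarrow> m \<le> n \<Longrightarrow> \<psi> n \<le> \<psi> m"
        and ns: "\<not> summable (\<lambda>n. \<psi> (Suc n) ^ CARD('d))"
        using D by (auto simp: Dset_def)
      show "z \<in> W \<psi>"
      proof (rule ccontr)
        assume "z \<notin> W \<psi>"
        then have fin: "finite {n. n \<ge> 1 \<and> aa z n < \<psi> n}"
          by (cases z) (auto simp: W_def aa_def)
        obtain N0 where N0: "\<forall>n\<in>{n. n \<ge> 1 \<and> aa z n < \<psi> n}. n < N0"
          using finite_nat_bounded[OF fin] by auto
        define N where "N = Suc N0"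
        have N1: "1 \<le> N" by (simp add: N_def)
        have le: "\<psi> n \<le> aa z n" if "N \<le> n" for n
        proof (rule ccontr)
          assume "\<not> \<psi> n \<le> aa z n"
          then have "n \<in> {n. n \<ge> 1 \<and> aa z n < \<psi> n}" using that N1 by auto
          with N0 have "n < N0" by blast
          with that show False by (simp add: N_def)
        qed
        have le2: "\<psi> n \<le> mn z N n" if "N \<le> n" for n
          unfolding mn_def using that N1
          by (subst Min_ge_iff) (auto intro: order_trans[OF mo le])
        obtain M :: nat where M: "\<forall>k. (\<Sum>j\<le>k. mn z N (Suc j) ^ CARD('d)) \<le> real M"
          using zG N1 unfolding GG_def by blast
        have "summable (\<lambda>j. mn z N (Suc j) ^ CARD('d))"
          by (rule bounded_imp_summable[of _ "real M"]) (use M in \<open>auto simp: mn_nonneg\<close>)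
        then have "summable (\<lambda>n. \<psi> (Suc n) ^ CARD('d))"
          by (rule summable_comparison_test'[where N=N])
             (auto intro!: power_mono le2 simp: nn abs_of_nonneg)
        with ns show False by blast
      qed
    qed
  qed
qed

lemma borel_coanalytic:
  fixes S :: "'a::topological_space set"
  assumes "S \<in> sets borel"
  shows "coanalytic S"
proof -
  have C: "- S \<in> sets borel" using sets.compl_sets[OF assms] by (simp add: Compl_eq_Diff_UNIV)
  have "snd -` (- S) \<inter> space borel \<in> sets (borel :: ((nat \<Rightarrow> nat) \<times> 'a) measure)"
    using measurable_sets[OF snd_meas C] .
  moreover have "- S = snd ` (snd -` (- S) \<inter> space (borel :: ((nat \<Rightarrow> nat) \<times> 'a) measure))"
    by (force simp: image_iff)
  ultimately show ?thesis unfolding coanalytic_def analytic_def by blast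
qed

lemma borel_lebesgue:
  fixes S :: "'a::euclidean_space set"
  assumes "S \<in> sets borel" shows "S \<in> sets lebesgue"
  using assms by (simp add: sets_completionI_sets)

theorem lemma9:
  fixes x y :: "real ^ 'd"
  shows "coanalytic (Pi_set :: ((real ^ 'd) \<times> (real ^ 'd)) set)
       \<and> coanalytic (Pi_hor y) \<and> coanalytic (Phi x)
       \<and> (Pi_set :: ((real ^ 'd) \<times> (real ^ 'd)) set) \<in> sets lebesgue
       \<and> Pi_hor y \<in> sets lebesgue \<and> Phi x \<in> sets lebesgue"
proof -
  have P: "(Pi_set :: ((real ^ 'd) \<times> (real ^ 'd)) set) \<in> sets borel"
    using GG_meas Pi_eq by metis
  have H: "Pi_hor y \<in> sets borel"
  proof -
    have "(\<lambda>x. (x, y)) -` Pi_set \<inter> space borel \<in> sets (borel :: (real^'d) measure)"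
      using measurable_sets[OF pair_meas P] .
    then show ?thesis by (simp add: Pi_hor_def vimage_def)
  qed
  have F: "Phi x \<in> sets borel"
  proof -
    have "Pair x -` Pi_set \<inter> space borel \<in> sets (borel :: (real^'d) measure)"
      using measurable_sets[OF pair_meas2 P] .
    then show ?thesis by (simp add: Phi_def vimage_def)
  qed
  show ?thesis using P H F by (simp add: borel_coanalytic borel_lebesgue)
qed

end
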